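(* Let $\mathsf{T}$ be a rooted plane tree and $\delta\in\mathcal{O}(\mathsf{T})$. For each $u\in\mathsf{T}$, let $o_u$ be the minimal ornament of $\delta$ (i.e., among the sets $\delta(w)$, $w\in\mathsf{T}$) that properly contains $\delta(u)$; if no such ornament exists, let $o_u=\mathsf{T}$. Then $\delta\in\mathsf{Pop}(\mathcal{O}(\mathsf{T}))$ if and only if for every $u\in\mathsf{T}$ and every child $u'$ of $u$ with $u'\in\delta(u)$, we have $\Delta_{\delta(u)}(u')\neq\Delta_{o_u}(u')$.
   Context: A rooted plane tree $\mathsf{T}$ is a finite tree with a distinguished root $\mathfrak{r}$, regarded as a poset $\leq_\mathsf{T}$ in which $v'\leq_\mathsf{T} v$ iff $v$ lies on the path from $v'$ to $\mathfrak{r}$; the children of $v$ are the nodes covered by $v$. An ornament of $\mathsf{T}$ is a nonempty set of nodes inducing a connected subgraph. For a set $S$ of nodes and $u\in S$, $\Delta_S(u)=\{w\in S:w\leq_\mathsf{T} u\}$. An ornamentation of $\mathsf{T}$ is a map $\delta$ from $\mathsf{T}$ to ornaments such that (1) for every $v$, the unique maximal element of $\delta(v)$ is $v$; (2) for all $v,v'$, $\delta(v)$ and $\delta(v')$ are either nested or disjoint. $\mathcal{O}(\mathsf{T})$ is the set of ornamentations ordered by $\delta\leq\delta'$ iff $\delta(v)\subseteq\delta'(v)$ for all $v$; it is a lattice with meet $(\delta\wedge\delta')(v)=\delta(v)\cap\delta'(v)$. The pop-stack operator is $\mathsf{Pop}(\delta)=\bigwedge(\{\delta\}\cup\{\delta':\delta'\lessdot\delta\})$,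 where $\lessdot$ denotes the cover relation of $\mathcal{O}(\mathsf{T})$. *)

theory Defs
  imports Main
begin

text \<open>A rooted tree with node set V, root r and parent map par.
  The plane (sibling order) structure plays no role in the statement and is omitted.\<close>
definition rooted_tree :: "'a set \<Rightarrow> 'a \<Rightarrow> ('a \<Rightarrow> 'a) \<Rightarrow> bool" where
  "rooted_tree V r par \<longleftrightarrow> finite V \<and> r \<in> V \<and> par r = r \<and>
     (\<forall>v\<in>V. par v \<in> V) \<and> (\<forall>v\<in>V. \<exists>k. (par ^^ k) v = r)"

definition tree_le :: "('a \<Rightarrow> 'a) \<Rightarrow> 'a \<Rightarrow> 'a \<Rightarrow> bool" where
  "tree_le par v' v \<longleftrightarrow> (\<exists>k. (par ^^ k) v' = v)"

definition children :: "'a set \<Rightarrow> 'a \<Rightarrow> ('a \<Rightarrow> 'a) \<Rightarrow> 'a \<Rightarrow> 'a set" where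
  "children V r par v = {c \<in> V. c \<noteq> r \<and> par c = v}"

definition induced_adj :: "'a \<Rightarrow> ('a \<Rightarrow> 'a) \<Rightarrow> 'a set \<Rightarrow> ('a \<times> 'a) set" where
  "induced_adj r par S = {(x, y). x \<in> S \<and> y \<in> S \<and>
      ((x \<noteq> r \<and> par x = y) \<or> (y \<noteq> r \<and> par y = x))}"

definition ornament :: "'a set \<Rightarrow> 'a \<Rightarrow> ('a \<Rightarrow> 'a) \<Rightarrow> 'a set \<Rightarrow> bool" where
  "ornament V r par S \<longleftrightarrow> S \<noteq> {} \<and> S \<subseteq> V \<and>
     (\<forall>x\<in>S. \<forall>y\<in>S. (x, y) \<in> (induced_adj r par S)\<^sup>*)"

definition ornamentations :: "'a set \<Rightarrow> 'a \<Rightarrow> ('a \<Rightarrow> 'a) \<Rightarrow> ('a \<Rightarrow> 'a set) set" where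
  "ornamentations V r par = {\<delta>.
     (\<forall>v. v \<notin> V \<longrightarrow> \<delta> v = {}) \<and>
     (\<forall>v\<in>V. ornament V r par (\<delta> v) \<and> v \<in> \<delta> v \<and> (\<forall>w\<in>\<delta> v. tree_le par w v)) \<and>
     (\<forall>v\<in>V. \<forall>v'\<in>V. \<delta> v \<subseteq> \<delta> v' \<or> \<delta> v' \<subseteq> \<delta> v \<or> \<delta> v \<inter> \<delta> v' = {})}"

definition orn_le :: "'a set \<Rightarrow> ('a \<Rightarrow> 'a set) \<Rightarrow> ('a \<Rightarrow> 'a set) \<Rightarrow> bool" where
  "orn_le V \<delta> \<delta>' \<longleftrightarrow> (\<forall>v\<in>V. \<delta> v \<subseteq> \<delta>' v)"

definition orn_less :: "'a set \<Rightarrow> ('a \<Rightarrow> 'a set) \<Rightarrow> ('a \<Rightarrow> 'a set) \<Rightarrow> bool" where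
  "orn_less V \<delta> \<delta>' \<longleftrightarrow> orn_le V \<delta> \<delta>' \<and> \<not> orn_le V \<delta>' \<delta>"

definition orn_covered :: "'a set \<Rightarrow> 'a \<Rightarrow> ('a \<Rightarrow> 'a) \<Rightarrow> ('a \<Rightarrow> 'a set) \<Rightarrow> ('a \<Rightarrow> 'a set) \<Rightarrow> bool" where
  "orn_covered V r par \<delta>' \<delta> \<longleftrightarrow>
     \<delta>' \<in> ornamentations V r par \<and> \<delta> \<in> ornamentations V r par \<and> orn_less V \<delta>' \<delta> \<and>
     \<not> (\<exists>\<gamma>\<in>ornamentations V r par. orn_less V \<delta>' \<gamma> \<and> orn_less V \<gamma> \<delta>)"

text \<open>Pop(\<delta>) = meet of \<delta> and its lower covers; meet in O(T) is pointwise intersection.\<close>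
definition Pop :: "'a set \<Rightarrow> 'a \<Rightarrow> ('a \<Rightarrow> 'a) \<Rightarrow> ('a \<Rightarrow> 'a set) \<Rightarrow> ('a \<Rightarrow> 'a set)" where
  "Pop V r par \<delta> = (\<lambda>v. \<delta> v \<inter> (\<Inter>{\<delta>' v | \<delta>'. orn_covered V r par \<delta>' \<delta>}))"

definition Delta :: "('a \<Rightarrow> 'a) \<Rightarrow> 'a set \<Rightarrow> 'a \<Rightarrow> 'a set" where
  "Delta par S u = {w \<in> S. tree_le par w u}"

definition o_orn :: "'a set \<Rightarrow> ('a \<Rightarrow> 'a set) \<Rightarrow> 'a \<Rightarrow> 'a set" where
  "o_orn V \<delta> u =
     (let A = {\<delta> w | w. w \<in> V \<and> \<delta> u \<subset> \<delta> w} in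
      if A = {} then V else (THE S. S \<in> A \<and> (\<forall>S'\<in>A. S' \<subseteq> S \<longrightarrow> S' = S)))"

end

theory Submission
  imports Defs
begin

locale rtree =
  fixes V :: "'a set" and r :: 'a and par :: "'a \<Rightarrow> 'a"
  assumes rt: "rooted_tree V r par"
begin

lemma finV: "finite V" and rV: "r \<in> V" and par_r: "par r = r"
  and parV: "v \<in> V \<Longrightarrow> par v \<in> V" and reach: "v \<in> V \<Longrightarrow> \<exists>k. (par ^^ k) v = r"
  using rt unfolding rooted_tree_def by auto

lemma funpow_r: "(par ^^ k) r = r"
  by (induction k) (auto simp: par_r)

lemma funpowV: "v \<in> V \<Longrightarrow> (par ^^ k) v \<in> V"
  by (induction k) (auto simp: parV)

lemma le_refl: "tree_le par x x"
  unfolding tree_le_def by (rule exI[of _ 0]) simp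

lemma le_trans: "tree_le par x y \<Longrightarrow> tree_le par y z \<Longrightarrow> tree_le par x z"
  unfolding tree_le_def by (metis funpow_add comp_apply)

lemma le_V: "x \<in> V \<Longrightarrow> tree_le par x y \<Longrightarrow> y \<in> V"
  unfolding tree_le_def using funpowV by blast

lemma cycle_r: assumes "x \<in> V" "(par ^^ n) x = x" "n > 0" shows "x = r"
proof -
  obtain k where k: "(par ^^ k) x = r" using reach assms(1) by blast
  have m: "(par ^^ (m * n)) x = x" for m
  proof (induction m)
    case 0 then show ?case by simp
  next
    case (Suc m)
    have "(par ^^ (Suc m * n)) x = (par ^^ n) ((par ^^ (m * n)) x)"
      by (simp add: funpow_add)
    then show ?case using Suc assms(2) by simp
  qed
  have "k \<le> k * n" using assms(3) by simp
  then have "(par ^^ (k * n)) x = (par ^^ (k * n - k)) ((par ^^ k) x)"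
    by (metis funpow_add comp_apply le_add_diff_inverse2)
  then have "(par ^^ (k * n)) x = r" using k funpow_r by simp
  then show ?thesis using m[of k] by simp
qed

lemma le_antisym: assumes "x \<in> V" "tree_le par x y" "tree_le par y x" shows "x = y"
proof -
  obtain a b where a: "(par ^^ a) x = y" and b: "(par ^^ b) y = x"
    using assms unfolding tree_le_def by blast
  have ab: "(par ^^ (b + a)) x = x" using a b by (simp add: funpow_add)
  show ?thesis
  proof (cases "b + a = 0")
    case True then show ?thesis using a by simp
  next
    case False
    then have "x = r" using cycle_r[OF assms(1) ab] by simp
    then show ?thesis using a funpow_r by simp
  qed
qed

lemma le_r: "x \<in> V \<Longrightarrow> tree_le par x r"
  unfolding tree_le_def using reach by blast

lemma r_le: "tree_le par r y \<Longrightarrow> y = r"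
  unfolding tree_le_def using funpow_r by auto

lemma le_comp: "tree_le par z a \<Longrightarrow> tree_le par z b \<Longrightarrow> tree_le par a b \<or> tree_le par b a"
proof -
  assume "tree_le par z a" "tree_le par z b"
  then obtain i j where i: "(par ^^ i) z = a" and j: "(par ^^ j) z = b"
    unfolding tree_le_def by blast
  show ?thesis
  proof (cases "i \<le> j")
    case True
    then have "(par ^^ (j - i)) a = b" using i j
      by (metis funpow_add comp_apply le_add_diff_inverse2)
    then show ?thesis unfolding tree_le_def by blast
  next
    case False
    then have "(par ^^ (i - j)) b = a" using i j
      by (metis funpow_add comp_apply le_add_diff_inverse2 nat_le_linear)
    then show ?thesis unfolding tree_le_def by blast
  qed
qed

lemma le_par_self: "tree_le par x (par x)"
  unfolding tree_le_def by (rule exI[of _ 1]) simp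

lemma le_par: assumes "tree_le par x y" "x \<noteq> y" shows "tree_le par (par x) y"
proof -
  obtain k where k: "(par ^^ k) x = y" using assms(1) unfolding tree_le_def by blast
  then obtain k' where "k = Suc k'" using assms(2) by (cases k) auto
  then have "(par ^^ k') (par x) = y" using k by (simp add: funpow_Suc_right del: funpow.simps)
  then show ?thesis unfolding tree_le_def by blast
qed

lemma le_notr: "tree_le par x y \<Longrightarrow> x \<noteq> y \<Longrightarrow> x \<noteq> r"
  using r_le by blast

lemma child_ex:
  assumes "tree_le par x u" "x \<noteq> u"
  shows "\<exists>u1. tree_le par x u1 \<and> u1 \<noteq> r \<and> par u1 = u"
proof -
  obtain k where "(par ^^ k) x = u" using assms(1) unfolding tree_le_def by blast
  then show ?thesis using assms(2)
  proof (induction k arbitrary: x)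
    case 0 then show ?case by simp
  next
    case (Suc k)
    have pk: "(par ^^ k) (par x) = u" using Suc.prems(1) by (simp add: funpow_Suc_right del: funpow.simps)
    show ?case
    proof (cases "par x = u")
      case True
      then have "x \<noteq> r" using Suc.prems(2) par_r by auto
      then show ?thesis using True le_refl by blast
    next
      case False
      then obtain u1 where "tree_le par (par x) u1" "u1 \<noteq> r" "par u1 = u" using Suc.IH[OF pk] by blast
      then show ?thesis using le_trans le_par_self by blast
    qed
  qed
qed

lemma exit_ex:
  assumes "tree_le par y u" "y \<notin> S" "u \<in> S"
  shows "\<exists>c. tree_le par y c \<and> tree_le par c u \<and> c \<notin> S \<and> c \<noteq> r \<and> par c \<in> S"
proof -
  obtain k where "(par ^^ k) y = u" using assms(1) unfolding tree_le_def by blast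
  then show ?thesis using assms(2)
  proof (induction k arbitrary: y)
    case 0 then show ?case using assms(3) by simp
  next
    case (Suc k)
    have pk: "(par ^^ k) (par y) = u" using Suc.prems(1) by (simp add: funpow_Suc_right del: funpow.simps)
    have yu: "tree_le par y u" using Suc.prems(1) unfolding tree_le_def by blast
    show ?case
    proof (cases "par y \<in> S")
      case True
      then have "y \<noteq> r" using Suc.prems(2) par_r by auto
      then show ?thesis using True le_refl Suc.prems(2) yu by blast
    next
      case False
      then obtain c where "tree_le par (par y) c" "tree_le par c u" "c \<notin> S" "c \<noteq> r" "par c \<in> S"
        using Suc.IH[OF pk] by blast
      then show ?thesis using le_trans le_par_self by blast
    qed
  qed
qed

definition topset :: "'a set \<Rightarrow> 'a \<Rightarrow> bool" where
  "topset S v \<longleftrightarrow> S \<subseteq> V \<and> v \<in> S \<and> (\<forall>w\<in>S. tree_le par w v) \<and> (\<forall>w\<in>S. w \<noteq> v \<longrightarrow> par w \<in> S)"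

lemma orn_par:
  assumes orn: "ornament V r par S" and vS: "v \<in> S" and top: "\<forall>w\<in>S. tree_le par w v"
    and wS: "w \<in> S" and wv: "w \<noteq> v"
  shows "par w \<in> S"
proof (rule ccontr)
  assume np: "par w \<notin> S"
  have SV: "S \<subseteq> V" using orn unfolding ornament_def by blast
  have "(w, y) \<in> (induced_adj r par S)\<^sup>* \<Longrightarrow> tree_le par y w" for y
  proof (induction rule: rtrancl_induct)
    case base then show ?case by (rule le_refl)
  next
    case (step y z)
    from step.hyps(2) have yz: "y \<in> S" "z \<in> S" "(y \<noteq> r \<and> par y = z) \<or> (z \<noteq> r \<and> par z = y)"
      unfolding induced_adj_def by auto
    show ?case
    proof (cases "par y = z \<and> y \<noteq> r")
      case True
      then have "y \<noteq> w" using np yz by auto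
      then show ?thesis using le_par step.IH True by blast
    next
      case False
      then have "par z = y" using yz by auto
      then show ?thesis using le_trans le_par_self step.IH by metis
    qed
  qed
  moreover have "(w, v) \<in> (induced_adj r par S)\<^sup>*" using orn wS vS unfolding ornament_def by blast
  ultimately have "tree_le par v w" by blast
  then show False using le_antisym top wS wv SV by blast
qed

lemma topset_orn:
  assumes "topset S v" shows "ornament V r par S"
proof -
  have SV: "S \<subseteq> V" and vS: "v \<in> S" and top: "\<forall>w\<in>S. tree_le par w v"
    and cl: "\<forall>w\<in>S. w \<noteq> v \<longrightarrow> par w \<in> S"
    using assms unfolding topset_def by auto
  let ?A = "induced_adj r par S"
  have conn: "(par ^^ k) x = v \<Longrightarrow> x \<in> S \<Longrightarrow> (x, v) \<in> ?A\<^sup>* \<and> (v, x) \<in> ?A\<^sup>*" for k x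
  proof (induction k arbitrary: x)
    case 0 then show ?case by simp
  next
    case (Suc k)
    show ?case
    proof (cases "x = v")
      case True then show ?thesis by simp
    next
      case False
      then have pS: "par x \<in> S" using cl Suc.prems by blast
      have xr: "x \<noteq> r"
      proof
        assume "x = r"
        then have "(par ^^ Suc k) x = x" using funpow_r by blast
        then show False using Suc.prems(1) False by simp
      qed
      have pk: "(par ^^ k) (par x) = v" using Suc.prems(1) by (simp add: funpow_Suc_right del: funpow.simps)
      have e1: "(x, par x) \<in> ?A" and e2: "(par x, x) \<in> ?A"
        using pS Suc.prems(2) xr unfolding induced_adj_def by auto
      from Suc.IH[OF pk pS] e1 e2 show ?thesis
        by (meson converse_rtrancl_into_rtrancl rtrancl_into_rtrancl)
    qed
  qed
  have "x \<in> S \<Longrightarrow> (x, v) \<in> ?A\<^sup>* \<and> (v, x) \<in> ?A\<^sup>*" for x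
    using conn top unfolding tree_le_def by blast
  then have "\<forall>x\<in>S. \<forall>y\<in>S. (x, y) \<in> ?A\<^sup>*" by (meson rtrancl_trans)
  then show ?thesis unfolding ornament_def using SV vS by blast
qed

lemma topset_path:
  assumes ts: "topset S v" and wS: "w \<in> S" and wy: "tree_le par w y" and yv: "tree_le par y v"
  shows "y \<in> S"
proof -
  obtain i where "(par ^^ i) w = y" using wy unfolding tree_le_def by blast
  then show ?thesis using wS wy
  proof (induction i arbitrary: w)
    case 0 then show ?case by simp
  next
    case (Suc i)
    show ?case
    proof (cases "w = v")
      case True
      then have "w \<in> V" using ts Suc.prems unfolding topset_def by blast
      then have "w = y" using le_antisym True yv Suc.prems(3) by blast
      then show ?thesis using Suc.prems by simp
    next
      case False
      then have "par w \<in> S" using ts Suc.prems(2) unfolding topset_def by blast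
      moreover have "(par ^^ i) (par w) = y" using Suc.prems(1) by (simp add: funpow_Suc_right del: funpow.simps)
      ultimately show ?thesis using Suc.IH unfolding tree_le_def by blast
    qed
  qed
qed

definition laminar :: "('a \<Rightarrow> 'a set) \<Rightarrow> bool" where
  "laminar \<delta> \<longleftrightarrow> (\<forall>v\<in>V. \<forall>v'\<in>V. \<delta> v \<subseteq> \<delta> v' \<or> \<delta> v' \<subseteq> \<delta> v \<or> \<delta> v \<inter> \<delta> v' = {})"

lemma orn_iff: "\<delta> \<in> ornamentations V r par \<longleftrightarrow>
   (\<forall>v. v \<notin> V \<longrightarrow> \<delta> v = {}) \<and> (\<forall>v\<in>V. topset (\<delta> v) v) \<and> laminar \<delta>"
proof -
  have eq: "(ornament V r par (\<delta> v) \<and> v \<in> \<delta> v \<and> (\<forall>w\<in>\<delta> v. tree_le par w v)) \<longleftrightarrow> topset (\<delta> v) v" for v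
  proof
    assume h: "ornament V r par (\<delta> v) \<and> v \<in> \<delta> v \<and> (\<forall>w\<in>\<delta> v. tree_le par w v)"
    have "\<delta> v \<subseteq> V" using h unfolding ornament_def by blast
    moreover have "\<forall>w\<in>\<delta> v. w \<noteq> v \<longrightarrow> par w \<in> \<delta> v" using orn_par h by blast
    ultimately show "topset (\<delta> v) v" unfolding topset_def using h by blast
  next
    assume h: "topset (\<delta> v) v"
    have "ornament V r par (\<delta> v)" using topset_orn[OF h] .
    then show "ornament V r par (\<delta> v) \<and> v \<in> \<delta> v \<and> (\<forall>w\<in>\<delta> v. tree_le par w v)"
      using h unfolding topset_def by blast
  qed
  show ?thesis unfolding ornamentations_def laminar_def mem_Collect_eq using eq by blast
qed

end

context rtree begin

abbreviation Orn where "Orn \<equiv> ornamentations V r par"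

lemma O_empty: "\<delta> \<in> Orn \<Longrightarrow> v \<notin> V \<Longrightarrow> \<delta> v = {}" using orn_iff by blast
lemma O_top: "\<delta> \<in> Orn \<Longrightarrow> v \<in> V \<Longrightarrow> topset (\<delta> v) v" using orn_iff by blast
lemma O_lam: "\<delta> \<in> Orn \<Longrightarrow> v \<in> V \<Longrightarrow> w \<in> V \<Longrightarrow> \<delta> v \<subseteq> \<delta> w \<or> \<delta> w \<subseteq> \<delta> v \<or> \<delta> v \<inter> \<delta> w = {}"
  using orn_iff unfolding laminar_def by blast
lemma O_vV: "\<delta> \<in> Orn \<Longrightarrow> w \<in> \<delta> v \<Longrightarrow> v \<in> V" using O_empty by blast
lemma O_V: "\<delta> \<in> Orn \<Longrightarrow> w \<in> \<delta> v \<Longrightarrow> w \<in> V"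
  using O_vV O_top unfolding topset_def by blast
lemma O_self: "\<delta> \<in> Orn \<Longrightarrow> v \<in> V \<Longrightarrow> v \<in> \<delta> v"
  using O_top unfolding topset_def by blast
lemma O_le: "\<delta> \<in> Orn \<Longrightarrow> w \<in> \<delta> v \<Longrightarrow> tree_le par w v"
  using O_vV O_top unfolding topset_def by blast
lemma O_par: "\<delta> \<in> Orn \<Longrightarrow> w \<in> \<delta> v \<Longrightarrow> w \<noteq> v \<Longrightarrow> par w \<in> \<delta> v"
  using O_vV O_top unfolding topset_def by blast
lemma O_path: "\<delta> \<in> Orn \<Longrightarrow> w \<in> \<delta> v \<Longrightarrow> tree_le par w y \<Longrightarrow> tree_le par y v \<Longrightarrow> y \<in> \<delta> v"
  using O_vV O_top topset_path by blast
lemma O_sub: assumes d: "\<delta> \<in> Orn" and w: "w \<in> \<delta> v" shows "\<delta> w \<subseteq> \<delta> v"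
proof -
  have vV: "v \<in> V" and wV: "w \<in> V" using O_V O_vV d w by blast+
  show ?thesis
  proof (rule ccontr)
    assume nt: "\<not> ?thesis"
    then have "\<delta> v \<subseteq> \<delta> w" using O_lam[OF d vV wV] w O_self[OF d wV] by blast
    then have "v \<in> \<delta> w" using O_self d vV by blast
    then have "v = w" using O_le d w le_antisym vV by blast
    then show False using nt by simp
  qed
qed
lemma O_inj: assumes d: "\<delta> \<in> Orn" and v: "v \<in> V" and w: "w \<in> V" and e: "\<delta> v = \<delta> w" shows "v = w"
proof -
  have "v \<in> \<delta> w" "w \<in> \<delta> v" using O_self[OF d v] O_self[OF d w] e by auto
  then have "tree_le par v w" "tree_le par w v" using O_le[OF d] by auto
  then show ?thesis using le_antisym[OF v] by blast
qed
lemma O_meet: "\<delta> \<in> Orn \<Longrightarrow> y \<in> \<delta> v \<Longrightarrow> y \<in> \<delta> w \<Longrightarrow> \<delta> v \<subseteq> \<delta> w \<or> \<delta> w \<subseteq> \<delta> v"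
  using O_lam O_vV by blast
lemma O_fin: "\<delta> \<in> Orn \<Longrightarrow> finite (\<delta> v)"
proof -
  assume d: "\<delta> \<in> Orn"
  have "\<delta> v \<subseteq> V" using O_V[OF d] by blast
  then show ?thesis using finite_subset finV by blast
qed

definition isfree where "isfree \<delta> v x \<longleftrightarrow> (\<forall>w\<in>\<delta> v. w \<noteq> v \<longrightarrow> x \<in> \<delta> w \<longrightarrow> w = x)"
definition leaf where "leaf \<delta> v x \<longleftrightarrow> v \<in> V \<and> x \<in> \<delta> v \<and> x \<noteq> v \<and> Delta par (\<delta> v) x = \<delta> x \<and> isfree \<delta> v x"

lemma freetop_ex:
  assumes d: "\<delta> \<in> Orn" and y: "y \<in> \<delta> v" and yv: "y \<noteq> v"
  shows "\<exists>m. m \<in> \<delta> v \<and> m \<noteq> v \<and> y \<in> \<delta> m \<and> isfree \<delta> v m"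
proof -
  let ?P = "\<lambda>w. w \<in> \<delta> v \<and> w \<noteq> v \<and> y \<in> \<delta> w"
  have yV: "y \<in> V" using O_V d y by blast
  have P0: "?P y" using y yv O_self[OF d yV] by blast
  have bnd: "\<forall>w. ?P w \<longrightarrow> card (\<delta> w) < Suc (card V)"
  proof (intro allI impI)
    fix w assume "?P w"
    have "\<delta> w \<subseteq> V" using O_V[OF d] by blast
    then have "card (\<delta> w) \<le> card V" using card_mono finV by blast
    then show "card (\<delta> w) < Suc (card V)" by simp
  qed
  obtain m where m: "?P m" and mx: "\<forall>w. ?P w \<longrightarrow> card (\<delta> w) \<le> card (\<delta> m)"
    using Lattices_Big.ex_has_greatest_nat[OF P0 bnd] by blast
  have "isfree \<delta> v m" unfolding isfree_def
  proof (intro ballI impI)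
    fix w assume w: "w \<in> \<delta> v" "w \<noteq> v" "m \<in> \<delta> w"
    have sub: "\<delta> m \<subseteq> \<delta> w" using O_sub d w(3) by blast
    then have "?P w" using w m by blast
    then have "card (\<delta> w) \<le> card (\<delta> m)" using mx by blast
    then have "\<delta> m = \<delta> w" using card_seteq[OF O_fin[OF d] sub] by blast
    moreover have "m \<in> V" "w \<in> V" using O_V[OF d] w m by blast+
    ultimately show "w = m" using O_inj[OF d] by metis
  qed
  then show ?thesis using m by blast
qed

lemma leaf_below:
  assumes d: "\<delta> \<in> Orn" and v: "v \<in> V" and x0: "x0 \<in> \<delta> v" "x0 \<noteq> v" "isfree \<delta> v x0"
  shows "\<exists>x. leaf \<delta> v x \<and> tree_le par x x0"
proof -
  let ?P = "\<lambda>x. x \<in> \<delta> v \<and> x \<noteq> v \<and> isfree \<delta> v x \<and> tree_le par x x0"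
  let ?D = "\<lambda>x. Delta par (\<delta> v) x"
  have P0: "?P x0" using x0 le_refl by blast
  obtain x where x: "?P x" and xm: "\<forall>y. ?P y \<longrightarrow> card (?D x) \<le> card (?D y)"
    using ex_has_least_nat[of ?P x0 "\<lambda>x. card (?D x)"] P0 by blast
  have xV: "x \<in> V" using O_V d x by blast
  have "?D x = \<delta> x"
  proof (rule ccontr)
    assume ne: "?D x \<noteq> \<delta> x"
    have "\<delta> x \<subseteq> ?D x" using O_sub[OF d] O_le[OF d] x unfolding Delta_def by blast
    then obtain y where y: "y \<in> \<delta> v" "tree_le par y x" "y \<notin> \<delta> x" using ne unfolding Delta_def by blast
    have xlev: "tree_le par x v" using O_le d x by blast
    have yv: "y \<noteq> v"
    proof
      assume "y = v"
      then have "x = v" using le_antisym[OF xV xlev] y(2) by simp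
      then show False using x by simp
    qed
    obtain m where m: "m \<in> \<delta> v" "m \<noteq> v" "y \<in> \<delta> m" "isfree \<delta> v m"
      using freetop_ex[OF d y(1) yv] by blast
    have mV: "m \<in> V" using O_V d m(1) by blast
    have ym: "tree_le par y m" using O_le d m(3) by blast
    have mx: "tree_le par m x"
    proof (rule ccontr)
      assume "\<not> tree_le par m x"
      then have "tree_le par x m" using le_comp[OF ym y(2)] by blast
      then have "x \<in> \<delta> m" using O_path[OF d m(3) y(2)] by blast
      then have "m = x" using x m unfolding isfree_def by blast
      then show False using \<open>\<not> tree_le par m x\<close> le_refl by simp
    qed
    have mnx: "m \<noteq> x" using m y by blast
    have Pm: "?P m" using m mx x le_trans by blast
    have sub: "?D m \<subseteq> ?D x" using mx le_trans unfolding Delta_def by blast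
    have "x \<in> ?D x" using x le_refl unfolding Delta_def by blast
    moreover have "x \<notin> ?D m" using le_antisym[OF xV] mx mnx unfolding Delta_def by blast
    ultimately have "?D m \<subset> ?D x" using sub by blast
    then have "card (?D m) < card (?D x)"
      by (rule psubset_card_mono[rotated]) (simp add: Delta_def O_fin[OF d])
    then show False using xm Pm by fastforce
  qed
  then show ?thesis using x v unfolding leaf_def by blast
qed


end

context rtree begin
lemma cut_orn:
  assumes d: "\<delta> \<in> Orn" and l: "leaf \<delta> v x"
  shows "\<delta>(v := \<delta> v - \<delta> x) \<in> Orn"
proof -
  let ?d1 = "\<delta>(v := \<delta> v - \<delta> x)"
  have vV: "v \<in> V" and xv: "x \<in> \<delta> v" "x \<noteq> v" and Dx: "Delta par (\<delta> v) x = \<delta> x"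
    and fr: "isfree \<delta> v x" using l unfolding leaf_def by auto
  have xV: "x \<in> V" using O_V d xv by blast
  have vnx: "v \<notin> \<delta> x"
  proof
    assume "v \<in> \<delta> x"
    then have "tree_le par v x" using O_le d by blast
    then show False using le_antisym[OF xV] O_le[OF d xv(1)] xv(2) by blast
  qed
  have e1: "\<forall>w. w \<notin> V \<longrightarrow> ?d1 w = {}" using O_empty[OF d] vV by auto
  have tv: "topset (\<delta> v - \<delta> x) v"
    unfolding topset_def
  proof (intro conjI ballI impI)
    show "\<delta> v - \<delta> x \<subseteq> V" using O_V d by blast
    show "v \<in> \<delta> v - \<delta> x" using O_self[OF d vV] vnx by blast
  next
    fix w assume "w \<in> \<delta> v - \<delta> x" then show "tree_le par w v" using O_le d by blast
  next
    fix w assume w: "w \<in> \<delta> v - \<delta> x" "w \<noteq> v"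
    have pw: "par w \<in> \<delta> v" using O_par d w by blast
    have "par w \<notin> \<delta> x"
    proof
      assume "par w \<in> \<delta> x"
      then have "tree_le par w x" using O_le[OF d] le_par_self le_trans by blast
      then have "w \<in> Delta par (\<delta> v) x" using w unfolding Delta_def by blast
      then show False using Dx w by blast
    qed
    then show "par w \<in> \<delta> v - \<delta> x" using pw by blast
  qed
  have t1: "\<forall>w\<in>V. topset (?d1 w) w" using tv O_top[OF d] by auto
  have key: "(\<delta> v - \<delta> x) \<subseteq> \<delta> w \<or> \<delta> w \<subseteq> (\<delta> v - \<delta> x) \<or> (\<delta> v - \<delta> x) \<inter> \<delta> w = {}"
    if wV: "w \<in> V" and wv: "w \<noteq> v" for w
  proof -
    consider "\<delta> v \<subseteq> \<delta> w" | "\<delta> w \<subseteq> \<delta> v" | "\<delta> v \<inter> \<delta> w = {}" using O_lam[OF d vV wV] by blast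
    then show ?thesis
    proof cases
      case 2
      then have wdv: "w \<in> \<delta> v" using O_self[OF d wV] by blast
      show ?thesis
      proof (cases "w \<in> \<delta> x")
        case True
        then have "\<delta> w \<subseteq> \<delta> x" using O_sub d by blast
        then show ?thesis by blast
      next
        case False
        have "\<delta> w \<inter> \<delta> x = {}"
        proof (rule ccontr)
          assume "\<delta> w \<inter> \<delta> x \<noteq> {}"
          then obtain z where "z \<in> \<delta> w" "z \<in> \<delta> x" by blast
          then have "\<delta> w \<subseteq> \<delta> x \<or> \<delta> x \<subseteq> \<delta> w" using O_meet d by blast
          then show False
          proof
            assume "\<delta> w \<subseteq> \<delta> x" then show False using False O_self[OF d wV] by blast
          next
            assume "\<delta> x \<subseteq> \<delta> w"
            then have "x \<in> \<delta> w" using O_self[OF d xV] by blast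
            then have "w = x" using fr wdv wv unfolding isfree_def by blast
            then show False using False O_self[OF d wV] by blast
          qed
        qed
        then show ?thesis using 2 by blast
      qed
    qed blast+
  qed
  have lam: "laminar ?d1" unfolding laminar_def
  proof (intro ballI)
    fix a b assume a: "a \<in> V" and b: "b \<in> V"
    show "?d1 a \<subseteq> ?d1 b \<or> ?d1 b \<subseteq> ?d1 a \<or> ?d1 a \<inter> ?d1 b = {}"
    proof (cases "a = v")
      case True
      show ?thesis
      proof (cases "b = v")
        case True then show ?thesis using \<open>a = v\<close> by simp
      next
        case False
        have "?d1 a = \<delta> v - \<delta> x" "?d1 b = \<delta> b" using True False by simp_all
        then show ?thesis using key[OF b False] by blast
      qed
    next
      case False
      show ?thesis
      proof (cases "b = v")
        case True
        have "?d1 b = \<delta> v - \<delta> x" "?d1 a = \<delta> a" using True False by simp_all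
        then show ?thesis using key[OF a False] by blast
      next
        case False
        have "?d1 b = \<delta> b" "?d1 a = \<delta> a" using False \<open>a \<noteq> v\<close> by simp_all
        then show ?thesis using O_lam[OF d a b] by simp
      qed
    qed
  qed
  show ?thesis using orn_iff e1 t1 lam by blast
qed

lemma cut_less:
  assumes d: "\<delta> \<in> Orn" and l: "leaf \<delta> v x"
  shows "orn_less V (\<delta>(v := \<delta> v - \<delta> x)) \<delta>"
proof -
  have vV: "v \<in> V" and xv: "x \<in> \<delta> v" using l unfolding leaf_def by auto
  have xV: "x \<in> V" using O_V d xv by blast
  have "x \<in> \<delta> x" using O_self d xV by blast
  then show ?thesis unfolding orn_less_def orn_le_def using vV xv by auto
qed

lemma cut_cover:
  assumes d: "\<delta> \<in> Orn" and l: "leaf \<delta> v x"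
  shows "orn_covered V r par (\<delta>(v := \<delta> v - \<delta> x)) \<delta>"
proof -
  let ?d1 = "\<delta>(v := \<delta> v - \<delta> x)"
  have vV: "v \<in> V" and xv: "x \<in> \<delta> v" "x \<noteq> v" using l unfolding leaf_def by auto
  have xV: "x \<in> V" using O_V d xv by blast
  have vnx: "v \<notin> \<delta> x"
  proof
    assume "v \<in> \<delta> x"
    then have "tree_le par v x" using O_le d by blast
    then show False using le_antisym[OF xV] O_le[OF d xv(1)] xv(2) by blast
  qed
  have nb: "\<not> (orn_less V ?d1 \<gamma> \<and> orn_less V \<gamma> \<delta>)" if g: "\<gamma> \<in> Orn" for \<gamma>
  proof
    assume "orn_less V ?d1 \<gamma> \<and> orn_less V \<gamma> \<delta>"
    then have l1: "orn_less V ?d1 \<gamma>" and l2: "orn_less V \<gamma> \<delta>" by auto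
    have le1: "\<forall>w\<in>V. ?d1 w \<subseteq> \<gamma> w" and le2: "\<forall>w\<in>V. \<gamma> w \<subseteq> \<delta> w"
      using l1 l2 unfolding orn_less_def orn_le_def by auto
    have eq: "\<forall>w\<in>V. w \<noteq> v \<longrightarrow> \<gamma> w = \<delta> w" using le1 le2 by (metis fun_upd_other subset_antisym)
    have gx: "\<gamma> x = \<delta> x" using eq xV xv by blast
    show False
    proof (cases "\<gamma> v \<inter> \<delta> x = {}")
      case True
      then have "\<gamma> v \<subseteq> ?d1 v" using le2 vV by auto
      then have "orn_le V \<gamma> ?d1" unfolding orn_le_def using le2 by auto
      then show False using l1 unfolding orn_less_def by blast
    next
      case False
      then obtain z where "z \<in> \<gamma> v" "z \<in> \<gamma> x" using gx by blast
      then have "\<gamma> v \<subseteq> \<gamma> x \<or> \<gamma> x \<subseteq> \<gamma> v" using O_meet g by blast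
      then show False
      proof
        assume "\<gamma> v \<subseteq> \<gamma> x" then show False using O_self[OF g vV] gx vnx by blast
      next
        assume "\<gamma> x \<subseteq> \<gamma> v"
        moreover have "\<delta> v - \<delta> x \<subseteq> \<gamma> v" using le1 vV by (metis fun_upd_same)
        ultimately have "\<delta> v \<subseteq> \<gamma> v" using gx by blast
        then have "orn_le V \<delta> \<gamma>" unfolding orn_le_def using eq by auto
        then show False using l2 unfolding orn_less_def by blast
      qed
    qed
  qed
  show ?thesis unfolding orn_covered_def using cut_orn[OF d l] d cut_less[OF d l] nb by blast
qed


end

context rtree begin
lemma cover_cut:
  assumes c: "orn_covered V r par \<delta>' \<delta>"
  shows "\<exists>v x. leaf \<delta> v x \<and> \<delta>' = \<delta>(v := \<delta> v - \<delta> x)"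
proof -
  have d: "\<delta> \<in> Orn" and d': "\<delta>' \<in> Orn" and lt: "orn_less V \<delta>' \<delta>"
    and nb: "\<not> (\<exists>\<gamma>\<in>Orn. orn_less V \<delta>' \<gamma> \<and> orn_less V \<gamma> \<delta>)"
    using c unfolding orn_covered_def by auto
  have le: "\<forall>w\<in>V. \<delta>' w \<subseteq> \<delta> w" using lt unfolding orn_less_def orn_le_def by blast
  let ?P = "\<lambda>w. w \<in> V \<and> \<delta>' w \<noteq> \<delta> w"
  have "\<exists>w. ?P w"
  proof (rule ccontr)
    assume "\<not> (\<exists>w. ?P w)"
    then have "orn_le V \<delta> \<delta>'" unfolding orn_le_def by auto
    then show False using lt unfolding orn_less_def by blast
  qed
  then obtain w0 where "?P w0" by blast
  then obtain v where Pv: "?P v" and vm: "\<forall>w. ?P w \<longrightarrow> card (\<delta> v) \<le> card (\<delta> w)"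
    using ex_has_least_nat[of ?P w0 "\<lambda>w. card (\<delta> w)"] by blast
  have vV: "v \<in> V" using Pv by blast
  have below: "\<delta>' w = \<delta> w" if w: "w \<in> \<delta> v" "w \<noteq> v" for w
  proof (rule ccontr)
    assume ne: "\<delta>' w \<noteq> \<delta> w"
    have wV: "w \<in> V" using O_V d w by blast
    have "\<delta> w \<subseteq> \<delta> v" using O_sub d w by blast
    moreover have "\<delta> w \<noteq> \<delta> v" using O_inj[OF d wV vV] w by blast
    ultimately have "card (\<delta> w) < card (\<delta> v)" using O_fin[OF d] psubset_card_mono by blast
    then show False using vm ne wV by fastforce
  qed
  obtain y where y: "y \<in> \<delta> v" "y \<notin> \<delta>' v" using Pv le vV by blast
  have yv: "y \<noteq> v" using O_self[OF d' vV] y by blast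
  obtain m where m: "m \<in> \<delta> v" "m \<noteq> v" "y \<in> \<delta> m" "isfree \<delta> v m"
    using freetop_ex[OF d y(1) yv] by blast
  have mV: "m \<in> V" using O_V d m by blast
  have mn: "m \<notin> \<delta>' v"
  proof
    assume md: "m \<in> \<delta>' v"
    have dm: "\<delta>' m = \<delta> m" using below m by blast
    have "m \<in> \<delta>' m" using O_self[OF d' mV] .
    then have "\<delta>' m \<subseteq> \<delta>' v \<or> \<delta>' v \<subseteq> \<delta>' m" using O_meet[OF d'] md by blast
    then show False
    proof
      assume "\<delta>' m \<subseteq> \<delta>' v" then show False using dm m y by blast
    next
      assume "\<delta>' v \<subseteq> \<delta>' m"
      then have "v \<in> \<delta> m" using O_self[OF d' vV] dm by blast
      then have "tree_le par v m" using O_le d by blast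
      then show False using le_antisym[OF mV] O_le[OF d m(1)] m(2) by blast
    qed
  qed
  obtain x where l: "leaf \<delta> v x" and xm: "tree_le par x m" using leaf_below[OF d vV m(1,2,4)] by blast
  have Dx: "Delta par (\<delta> v) x = \<delta> x" using l unfolding leaf_def by blast
  have disj: "\<delta> x \<inter> \<delta>' v = {}"
  proof (rule ccontr)
    assume "\<delta> x \<inter> \<delta>' v \<noteq> {}"
    then obtain z where z: "z \<in> \<delta> x" "z \<in> \<delta>' v" by blast
    then have "tree_le par z x" using Dx unfolding Delta_def by blast
    then have "tree_le par z m" using xm le_trans by blast
    then have "m \<in> \<delta>' v" using O_path[OF d' z(2)] O_le[OF d m(1)] by blast
    then show False using mn by blast
  qed
  let ?d1 = "\<delta>(v := \<delta> v - \<delta> x)"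
  have o1: "?d1 \<in> Orn" using cut_orn[OF d l] .
  have l1: "orn_less V ?d1 \<delta>" using cut_less[OF d l] .
  have le1: "orn_le V \<delta>' ?d1" unfolding orn_le_def using le disj by auto
  have "\<not> orn_less V \<delta>' ?d1" using nb o1 l1 by blast
  then have "orn_le V ?d1 \<delta>'" using le1 unfolding orn_less_def by blast
  then have eqV: "\<forall>w\<in>V. \<delta>' w = ?d1 w" using le1 unfolding orn_le_def by blast
  have "\<delta>' = ?d1"
  proof
    fix w show "\<delta>' w = ?d1 w"
    proof (cases "w \<in> V")
      case True then show ?thesis using eqV by blast
    next
      case False
      then show ?thesis using O_empty[OF d' False] O_empty[OF d False] vV by auto
    qed
  qed
  then show ?thesis using l by blast
qed

lemma Pop_mem:
  assumes d: "\<delta> \<in> Orn"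
  shows "y \<in> Pop V r par \<delta> v \<longleftrightarrow> y \<in> \<delta> v \<and> (\<forall>x. leaf \<delta> v x \<longrightarrow> y \<notin> \<delta> x)"
proof -
  have "y \<in> Pop V r par \<delta> v \<longleftrightarrow> y \<in> \<delta> v \<and> (\<forall>\<delta>'. orn_covered V r par \<delta>' \<delta> \<longrightarrow> y \<in> \<delta>' v)"
    unfolding Pop_def by blast
  also have "\<dots> \<longleftrightarrow> y \<in> \<delta> v \<and> (\<forall>x. leaf \<delta> v x \<longrightarrow> y \<notin> \<delta> x)"
  proof
    assume h: "y \<in> \<delta> v \<and> (\<forall>\<delta>'. orn_covered V r par \<delta>' \<delta> \<longrightarrow> y \<in> \<delta>' v)"
    show "y \<in> \<delta> v \<and> (\<forall>x. leaf \<delta> v x \<longrightarrow> y \<notin> \<delta> x)"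
    proof (intro conjI allI impI)
      show "y \<in> \<delta> v" using h by blast
    next
      fix x assume "leaf \<delta> v x"
      then have "orn_covered V r par (\<delta>(v := \<delta> v - \<delta> x)) \<delta>" using cut_cover d by blast
      then show "y \<notin> \<delta> x" using h by fastforce
    qed
  next
    assume h: "y \<in> \<delta> v \<and> (\<forall>x. leaf \<delta> v x \<longrightarrow> y \<notin> \<delta> x)"
    show "y \<in> \<delta> v \<and> (\<forall>\<delta>'. orn_covered V r par \<delta>' \<delta> \<longrightarrow> y \<in> \<delta>' v)"
    proof (intro conjI allI impI)
      show "y \<in> \<delta> v" using h by blast
    next
      fix \<delta>' assume "orn_covered V r par \<delta>' \<delta>"
      then obtain v' x where l: "leaf \<delta> v' x" and e: "\<delta>' = \<delta>(v' := \<delta> v' - \<delta> x)"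
        using cover_cut by blast
      show "y \<in> \<delta>' v"
      proof (cases "v' = v")
        case True then show ?thesis using h l e by auto
      next
        case False then show ?thesis using h e by auto
      qed
    qed
  qed
  finally show ?thesis .
qed


end

context rtree begin

lemma child_neq: "u' \<in> V \<Longrightarrow> u' \<noteq> r \<Longrightarrow> par u' = u \<Longrightarrow> u' \<noteq> u"
proof
  assume a: "u' \<in> V" "u' \<noteq> r" "par u' = u" "u' = u"
  then have "(par ^^ 1) u' = u'" by simp
  then have "u' = r" using cycle_r[OF a(1) _ zero_less_one] by blast
  then show False using a(2) by simp
qed

abbreviation oo where "oo \<delta> u \<equiv> o_orn V \<delta> u"

lemma o_cases:
  assumes d: "\<delta> \<in> Orn" and u: "u \<in> V"
  shows "(oo \<delta> u = V \<and> (\<forall>w\<in>V. \<not> \<delta> u \<subset> \<delta> w)) \<or>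
         (\<exists>p\<in>V. oo \<delta> u = \<delta> p \<and> \<delta> u \<subset> \<delta> p \<and> (\<forall>w\<in>V. \<delta> u \<subset> \<delta> w \<longrightarrow> \<delta> p \<subseteq> \<delta> w))"
proof (cases "\<exists>w\<in>V. \<delta> u \<subset> \<delta> w")
  case False
  then have "{\<delta> w | w. w \<in> V \<and> \<delta> u \<subset> \<delta> w} = {}" by blast
  then have "oo \<delta> u = V" unfolding o_orn_def Let_def by simp
  then show ?thesis using False by blast
next
  case True
  let ?P = "\<lambda>w. w \<in> V \<and> \<delta> u \<subset> \<delta> w"
  obtain w0 where "?P w0" using True by blast
  then obtain p where Pp: "?P p" and pm: "\<forall>w. ?P w \<longrightarrow> card (\<delta> p) \<le> card (\<delta> w)"
    using ex_has_least_nat[of ?P w0 "\<lambda>w. card (\<delta> w)"] by blast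
  have pmin: "\<forall>w\<in>V. \<delta> u \<subset> \<delta> w \<longrightarrow> \<delta> p \<subseteq> \<delta> w"
  proof (intro ballI impI)
    fix w assume w: "w \<in> V" "\<delta> u \<subset> \<delta> w"
    have "u \<in> \<delta> p" "u \<in> \<delta> w" using O_self[OF d u] Pp w by blast+
    then have "\<delta> p \<subseteq> \<delta> w \<or> \<delta> w \<subseteq> \<delta> p" using O_meet d by blast
    then show "\<delta> p \<subseteq> \<delta> w"
    proof
      assume sub: "\<delta> w \<subseteq> \<delta> p"
      moreover have "card (\<delta> p) \<le> card (\<delta> w)" using pm w by blast
      ultimately have "\<delta> w = \<delta> p" using card_seteq[OF O_fin[OF d]] by blast
      then show ?thesis by simp
    qed
  qed
  let ?A = "{\<delta> w | w. w \<in> V \<and> \<delta> u \<subset> \<delta> w}"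
  have Ane: "?A \<noteq> {}" using Pp by blast
  have "(THE S. S \<in> ?A \<and> (\<forall>S'\<in>?A. S' \<subseteq> S \<longrightarrow> S' = S)) = \<delta> p"
  proof (rule the_equality)
    show "\<delta> p \<in> ?A \<and> (\<forall>S'\<in>?A. S' \<subseteq> \<delta> p \<longrightarrow> S' = \<delta> p)" using Pp pmin by blast
  next
    fix S assume S: "S \<in> ?A \<and> (\<forall>S'\<in>?A. S' \<subseteq> S \<longrightarrow> S' = S)"
    then obtain w where "w \<in> V" "\<delta> u \<subset> \<delta> w" "S = \<delta> w" by blast
    then have "\<delta> p \<subseteq> S" using pmin by blast
    then show "S = \<delta> p" using S Pp by blast
  qed
  moreover have "oo \<delta> u = (THE S. S \<in> ?A \<and> (\<forall>S'\<in>?A. S' \<subseteq> S \<longrightarrow> S' = S))"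
    unfolding o_orn_def Let_def by (simp only: if_not_P[OF Ane])
  ultimately have "oo \<delta> u = \<delta> p" by simp
  then show ?thesis using Pp pmin by blast
qed

lemma o_sup: assumes d: "\<delta> \<in> Orn" and u: "u \<in> V" shows "\<delta> u \<subseteq> oo \<delta> u" "oo \<delta> u \<subseteq> V"
  using o_cases[OF d u] O_V[OF d] by blast+

lemma o_path: assumes d: "\<delta> \<in> Orn" and u: "u \<in> V" and y: "y \<in> oo \<delta> u"
  and yz: "tree_le par y z" and zu: "tree_le par z u" shows "z \<in> oo \<delta> u"
  using o_cases[OF d u]
proof
  assume "oo \<delta> u = V \<and> (\<forall>w\<in>V. \<not> \<delta> u \<subset> \<delta> w)"
  then show ?thesis using y yz le_V by auto
next
  assume "\<exists>p\<in>V. oo \<delta> u = \<delta> p \<and> \<delta> u \<subset> \<delta> p \<and> (\<forall>w\<in>V. \<delta> u \<subset> \<delta> w \<longrightarrow> \<delta> p \<subseteq> \<delta> w)"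
  then obtain p where p: "p \<in> V" "oo \<delta> u = \<delta> p" "\<delta> u \<subset> \<delta> p" by blast
  have "u \<in> \<delta> p" using O_self[OF d u] p by blast
  then have "tree_le par u p" using O_le d by blast
  then show ?thesis using O_path[OF d _ yz] y p zu le_trans by metis
qed

lemma o_min: assumes d: "\<delta> \<in> Orn" and u: "u \<in> V" and w: "w \<in> V" and s: "\<delta> u \<subset> \<delta> w"
  shows "oo \<delta> u \<subseteq> \<delta> w"
  using o_cases[OF d u] w s by blast

lemma o_child: assumes d: "\<delta> \<in> Orn" and u: "u \<in> V" and u1: "u1 \<in> \<delta> u" "u1 \<noteq> r" "par u1 = u"
  shows "oo \<delta> u1 = \<delta> u"
proof -
  have u1V: "u1 \<in> V" using O_V d u1 by blast
  have ne: "u1 \<noteq> u" using child_neq[OF u1V u1(2,3)] .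
  have ss: "\<delta> u1 \<subset> \<delta> u" using O_sub[OF d u1(1)] O_inj[OF d u1V u] ne by blast
  show ?thesis using o_cases[OF d u1V]
  proof
    assume "oo \<delta> u1 = V \<and> (\<forall>w\<in>V. \<not> \<delta> u1 \<subset> \<delta> w)"
    then show ?thesis using ss u by blast
  next
    assume "\<exists>p\<in>V. oo \<delta> u1 = \<delta> p \<and> \<delta> u1 \<subset> \<delta> p \<and> (\<forall>w\<in>V. \<delta> u1 \<subset> \<delta> w \<longrightarrow> \<delta> p \<subseteq> \<delta> w)"
    then obtain p where p: "p \<in> V" "oo \<delta> u1 = \<delta> p" "\<delta> u1 \<subset> \<delta> p"
      "\<forall>w\<in>V. \<delta> u1 \<subset> \<delta> w \<longrightarrow> \<delta> p \<subseteq> \<delta> w" by blast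
    have pu: "\<delta> p \<subseteq> \<delta> u" using p(4) ss u by blast
    have u1p: "u1 \<in> \<delta> p" using O_self[OF d u1V] p(3) by blast
    have "u1 \<noteq> p" using p(3) by blast
    then have "tree_le par u p" using le_par O_le[OF d u1p] u1(3) by blast
    moreover have "tree_le par u1 u" using le_par_self u1(3) by metis
    ultimately have "u \<in> \<delta> p" using O_path[OF d u1p] by blast
    then have "\<delta> u \<subseteq> \<delta> p" using O_sub d by blast
    then show ?thesis using pu p(2) by blast
  qed
qed

lemma o_inside: assumes d: "\<delta> \<in> Orn" and u: "u \<in> V" and x: "x \<in> \<delta> u" "x \<noteq> u"
  shows "oo \<delta> x \<subseteq> \<delta> u"
proof -
  have xV: "x \<in> V" using O_V d x by blast
  have "\<delta> x \<subset> \<delta> u" using O_sub[OF d x(1)] O_inj[OF d xV u] x(2) by blast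
  then show ?thesis using o_min[OF d xV u] by blast
qed

lemma hang_up: assumes d: "\<delta> \<in> Orn" and u: "u \<in> V" and cV: "c \<in> V" and c: "c \<notin> \<delta> u" "par c \<in> \<delta> u"
  and w: "w \<in> V" "\<delta> c \<subset> \<delta> w"
  shows "\<delta> u \<subset> \<delta> w"
proof -
  have cw: "c \<in> \<delta> w" using O_self[OF d cV] w by blast
  have "c \<noteq> w" using w by blast
  then have pcw: "tree_le par (par c) w" using le_par O_le[OF d cw] by blast
  have pcu: "tree_le par (par c) u" using O_le d c(2) by blast
  have "\<not> tree_le par w u"
  proof
    assume "tree_le par w u"
    then have "w \<in> \<delta> u" using O_path[OF d c(2) pcw] by blast
    then have "\<delta> w \<subseteq> \<delta> u" using O_sub d by blast
    then show False using cw c(1) by blast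
  qed
  then have uw: "tree_le par u w" using le_comp[OF pcw pcu] by blast
  have "tree_le par c u" using le_trans[OF le_par_self pcu] .
  then have "u \<in> \<delta> w" using O_path[OF d cw _ uw] by blast
  then have "\<delta> u \<subseteq> \<delta> w" using O_sub d by blast
  moreover have "\<delta> u \<noteq> \<delta> w" using cw c(1) by blast
  ultimately show ?thesis by blast
qed

lemma o_hang: assumes d: "\<delta> \<in> Orn" and u: "u \<in> V" and c: "c \<in> oo \<delta> u" "c \<notin> \<delta> u" "par c \<in> \<delta> u"
  shows "oo \<delta> c = oo \<delta> u"
proof -
  have cV: "c \<in> V" using o_sup[OF d u] c by blast
  have cu: "tree_le par c u" using le_trans[OF le_par_self O_le[OF d c(3)]] .
  have ccase: "\<delta> c \<subset> \<delta> p" if p: "p \<in> V" "oo \<delta> u = \<delta> p" "\<delta> u \<subset> \<delta> p" for p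
  proof -
    have cp: "c \<in> \<delta> p" using c p by blast
    have "\<delta> c \<noteq> \<delta> p"
    proof
      assume "\<delta> c = \<delta> p"
      then have "u \<in> \<delta> c" using O_self[OF d u] p by blast
      then have "u = c" using O_le[OF d] le_antisym[OF cV] cu by blast
      then show False using O_self[OF d u] c by blast
    qed
    then show ?thesis using O_sub[OF d cp] by blast
  qed
  show ?thesis using o_cases[OF d cV]
  proof
    assume A: "oo \<delta> c = V \<and> (\<forall>w\<in>V. \<not> \<delta> c \<subset> \<delta> w)"
    show ?thesis using o_cases[OF d u]
    proof
      assume "oo \<delta> u = V \<and> (\<forall>w\<in>V. \<not> \<delta> u \<subset> \<delta> w)" then show ?thesis using A by simp
    next
      assume "\<exists>p\<in>V. oo \<delta> u = \<delta> p \<and> \<delta> u \<subset> \<delta> p \<and> (\<forall>w\<in>V. \<delta> u \<subset> \<delta> w \<longrightarrow> \<delta> p \<subseteq> \<delta> w)"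
      then obtain p where p: "p \<in> V" "oo \<delta> u = \<delta> p" "\<delta> u \<subset> \<delta> p" by blast
      then show ?thesis using ccase[OF p] A p(1) by blast
    qed
  next
    assume "\<exists>q\<in>V. oo \<delta> c = \<delta> q \<and> \<delta> c \<subset> \<delta> q \<and> (\<forall>w\<in>V. \<delta> c \<subset> \<delta> w \<longrightarrow> \<delta> q \<subseteq> \<delta> w)"
    then obtain q where q: "q \<in> V" "oo \<delta> c = \<delta> q" "\<delta> c \<subset> \<delta> q" "\<forall>w\<in>V. \<delta> c \<subset> \<delta> w \<longrightarrow> \<delta> q \<subseteq> \<delta> w" by blast
    have uq: "\<delta> u \<subset> \<delta> q" using hang_up[OF d u cV c(2,3) q(1,3)] .
    show ?thesis using o_cases[OF d u]
    proof
      assume "oo \<delta> u = V \<and> (\<forall>w\<in>V. \<not> \<delta> u \<subset> \<delta> w)" then show ?thesis using uq q by blast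
    next
      assume "\<exists>p\<in>V. oo \<delta> u = \<delta> p \<and> \<delta> u \<subset> \<delta> p \<and> (\<forall>w\<in>V. \<delta> u \<subset> \<delta> w \<longrightarrow> \<delta> p \<subseteq> \<delta> w)"
      then obtain p where p: "p \<in> V" "oo \<delta> u = \<delta> p" "\<delta> u \<subset> \<delta> p" "\<forall>w\<in>V. \<delta> u \<subset> \<delta> w \<longrightarrow> \<delta> p \<subseteq> \<delta> w" by blast
      have "\<delta> p \<subseteq> \<delta> q" using p(4) uq q(1) by blast
      moreover have "\<delta> q \<subseteq> \<delta> p" using q(4) ccase[OF p(1-3)] p(1) by blast
      ultimately show ?thesis using p q by blast
    qed
  qed
qed

definition eps where "eps \<delta> = (\<lambda>u. if u \<in> V then Delta par (oo \<delta> u) u else {})"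

lemma eps_sub: assumes d: "\<delta> \<in> Orn" and v: "v \<in> V" and w: "w \<in> V" and wv: "tree_le par w v"
  and wo: "w \<in> oo \<delta> v" shows "eps \<delta> w \<subseteq> eps \<delta> v"
proof (cases "w = v")
  case True then show ?thesis by simp
next
  case False
  have "oo \<delta> w \<subseteq> oo \<delta> v" using o_cases[OF d v]
  proof
    assume "oo \<delta> v = V \<and> (\<forall>w\<in>V. \<not> \<delta> v \<subset> \<delta> w)" then show ?thesis using o_sup[OF d w] by simp
  next
    assume "\<exists>p\<in>V. oo \<delta> v = \<delta> p \<and> \<delta> v \<subset> \<delta> p \<and> (\<forall>w\<in>V. \<delta> v \<subset> \<delta> w \<longrightarrow> \<delta> p \<subseteq> \<delta> w)"
    then obtain p where p: "p \<in> V" "oo \<delta> v = \<delta> p" "\<delta> v \<subset> \<delta> p" by blast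
    have wp: "w \<in> \<delta> p" using wo p by simp
    have "\<delta> w \<noteq> \<delta> p"
    proof
      assume "\<delta> w = \<delta> p"
      then have "v \<in> \<delta> w" using O_self[OF d v] p by blast
      then have "tree_le par v w" using O_le d by blast
      then show False using le_antisym[OF w wv] False by blast
    qed
    then have "\<delta> w \<subset> \<delta> p" using O_sub[OF d wp] by blast
    then show ?thesis using o_min[OF d w p(1)] p by simp
  qed
  then show ?thesis unfolding eps_def Delta_def using v w wv le_trans by auto
qed

lemma eps_orn: assumes d: "\<delta> \<in> Orn" shows "eps \<delta> \<in> Orn"
proof -
  have e1: "\<forall>v. v \<notin> V \<longrightarrow> eps \<delta> v = {}" unfolding eps_def by simp
  have t: "topset (eps \<delta> u) u" if u: "u \<in> V" for u
    unfolding topset_def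
  proof (intro conjI ballI impI)
    show "eps \<delta> u \<subseteq> V" using o_sup[OF d u] u unfolding eps_def Delta_def by auto
    show "u \<in> eps \<delta> u" using o_sup[OF d u] O_self[OF d u] u le_refl unfolding eps_def Delta_def by auto
  next
    fix w assume "w \<in> eps \<delta> u" then show "tree_le par w u" using u unfolding eps_def Delta_def by auto
  next
    fix w assume w: "w \<in> eps \<delta> u" "w \<noteq> u"
    then have wo: "w \<in> oo \<delta> u" and wu: "tree_le par w u" using u unfolding eps_def Delta_def by auto
    have "tree_le par (par w) u" using le_par[OF wu w(2)] .
    moreover have "par w \<in> oo \<delta> u" using o_path[OF d u wo le_par_self] calculation by blast
    ultimately show "par w \<in> eps \<delta> u" using u unfolding eps_def Delta_def by auto
  qed
  have lam: "laminar (eps \<delta>)" unfolding laminar_def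
  proof (intro ballI)
    fix a b assume a: "a \<in> V" and b: "b \<in> V"
    show "eps \<delta> a \<subseteq> eps \<delta> b \<or> eps \<delta> b \<subseteq> eps \<delta> a \<or> eps \<delta> a \<inter> eps \<delta> b = {}"
    proof (cases "eps \<delta> a \<inter> eps \<delta> b = {}")
      case True then show ?thesis by blast
    next
      case False
      then obtain z where za: "z \<in> oo \<delta> a" "tree_le par z a" and zb: "z \<in> oo \<delta> b" "tree_le par z b"
        using a b unfolding eps_def Delta_def by auto
      from le_comp[OF za(2) zb(2)] show ?thesis
      proof
        assume ab: "tree_le par a b"
        then have "a \<in> oo \<delta> b" using o_path[OF d b zb(1) za(2)] by blast
        then show ?thesis using eps_sub[OF d b a ab] by blast
      next
        assume ba: "tree_le par b a"
        then have "b \<in> oo \<delta> a" using o_path[OF d a za(1) zb(2)] by blast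
        then show ?thesis using eps_sub[OF d a b ba] by blast
      qed
    qed
  qed
  show ?thesis using orn_iff e1 t lam by blast
qed

end

context rtree begin

lemma pop_cond:
  assumes e: "\<epsilon> \<in> Orn" and dd: "\<delta> = Pop V r par \<epsilon>" and d: "\<delta> \<in> Orn"
    and u: "u \<in> V" and u': "u' \<in> V" "u' \<noteq> r" "par u' = u" "u' \<in> \<delta> u"
  shows "\<exists>x. tree_le par x u' \<and> x \<notin> \<delta> u \<and> x \<in> oo \<delta> u"
proof -
  have Pm: "\<And>y v. y \<in> \<delta> v \<longleftrightarrow> y \<in> \<epsilon> v \<and> (\<forall>x. leaf \<epsilon> v x \<longrightarrow> y \<notin> \<epsilon> x)"
    using Pop_mem[OF e] dd by simp
  have u'e: "u' \<in> \<epsilon> u" using Pm u'(4) by blast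
  have ne: "u' \<noteq> u" using child_neq[OF u'(1-3)] .
  have u'u: "tree_le par u' u" using le_par_self u'(3) by metis
  have fr: "isfree \<epsilon> u u'" unfolding isfree_def
  proof (intro ballI impI)
    fix w assume w: "w \<in> \<epsilon> u" "w \<noteq> u" "u' \<in> \<epsilon> w"
    have wV: "w \<in> V" using O_V e w(1) by blast
    have u'w: "tree_le par u' w" using O_le e w(3) by blast
    show "w = u'"
    proof (rule ccontr)
      assume "w \<noteq> u'"
      then have "tree_le par u w" using le_par[OF u'w] u'(3) by metis
      then show False using le_antisym[OF wV O_le[OF e w(1)]] w(2) by blast
    qed
  qed
  have "\<not> leaf \<epsilon> u u'" using Pm u'(4) O_self[OF e u'(1)] by blast
  then have nD: "Delta par (\<epsilon> u) u' \<noteq> \<epsilon> u'" using u u'e ne fr unfolding leaf_def by blast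
  have "\<epsilon> u' \<subseteq> Delta par (\<epsilon> u) u'" using O_sub[OF e u'e] O_le[OF e] unfolding Delta_def by blast
  then obtain y where y: "y \<in> \<epsilon> u" "tree_le par y u'" "y \<notin> \<epsilon> u'" using nD unfolding Delta_def by blast
  have yu: "y \<noteq> u"
  proof
    assume "y = u" then have "u' = u" using le_antisym[OF u'(1) u'u] y(2) by simp
    then show False using ne by simp
  qed
  obtain m where m: "m \<in> \<epsilon> u" "m \<noteq> u" "y \<in> \<epsilon> m" "isfree \<epsilon> u m"
    using freetop_ex[OF e y(1) yu] by blast
  have ym: "tree_le par y m" using O_le e m(3) by blast
  have mu': "tree_le par m u'"
  proof (rule ccontr)
    assume nm: "\<not> tree_le par m u'"
    then have "tree_le par u' m" using le_comp[OF ym y(2)] by blast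
    then have "u' \<in> \<epsilon> m" using O_path[OF e m(3) y(2)] by blast
    then have "m = u'" using fr m unfolding isfree_def by blast
    then show False using nm le_refl by simp
  qed
  obtain x where l: "leaf \<epsilon> u x" and xm: "tree_le par x m" using leaf_below[OF e u m(1,2,4)] by blast
  have xeu: "x \<in> \<epsilon> u" using l unfolding leaf_def by blast
  have xV: "x \<in> V" using O_V e xeu by blast
  have xu': "tree_le par x u'" using le_trans[OF xm mu'] .
  have xnd: "x \<notin> \<delta> u" using Pm l O_self[OF e xV] by blast
  have "x \<in> oo \<delta> u" using o_cases[OF d u]
  proof
    assume "oo \<delta> u = V \<and> (\<forall>w\<in>V. \<not> \<delta> u \<subset> \<delta> w)" then show ?thesis using xV by simp
  next
    assume "\<exists>p\<in>V. oo \<delta> u = \<delta> p \<and> \<delta> u \<subset> \<delta> p \<and> (\<forall>w\<in>V. \<delta> u \<subset> \<delta> w \<longrightarrow> \<delta> p \<subseteq> \<delta> w)"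
    then obtain p where p: "p \<in> V" "oo \<delta> u = \<delta> p" "\<delta> u \<subset> \<delta> p" by blast
    have up: "u \<in> \<delta> p" using O_self[OF d u] p by blast
    have unp: "u \<noteq> p" using p by blast
    have uep: "u \<in> \<epsilon> p" using Pm up by blast
    then have "x \<in> \<epsilon> p" using O_sub[OF e] xeu by blast
    moreover have "\<forall>x2. leaf \<epsilon> p x2 \<longrightarrow> x \<notin> \<epsilon> x2"
    proof (intro allI impI)
      fix x2 assume l2: "leaf \<epsilon> p x2"
      show "x \<notin> \<epsilon> x2"
      proof
        assume xx2: "x \<in> \<epsilon> x2"
        have xx2l: "tree_le par x x2" using O_le e xx2 by blast
        have xul: "tree_le par x u" using O_le e xeu by blast
        have "u \<in> \<epsilon> x2"
        proof (cases "tree_le par u x2")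
          case True then show ?thesis using O_path[OF e xx2 xul] by blast
        next
          case False
          then have "tree_le par x2 u" using le_comp[OF xx2l xul] by blast
          then have "x2 \<in> \<epsilon> u" using O_path[OF e xeu xx2l] by blast
          then have "u = x2" using l2 uep unp unfolding leaf_def isfree_def by blast
          then show ?thesis using O_self[OF e u] by simp
        qed
        then show False using Pm up l2 by blast
      qed
    qed
    ultimately show ?thesis using Pm p by blast
  qed
  then show ?thesis using xu' xnd by blast
qed

lemma eps_a:
  assumes d: "\<delta> \<in> Orn"
    and cond: "\<forall>u\<in>V. \<forall>u'\<in>children V r par u. u' \<in> \<delta> u \<longrightarrow> Delta par (\<delta> u) u' \<noteq> Delta par (oo \<delta> u) u'"
    and v: "v \<in> V" and y: "y \<in> \<delta> v"
  shows "y \<in> eps \<delta> v \<and> (\<forall>x. leaf (eps \<delta>) v x \<longrightarrow> y \<notin> eps \<delta> x)"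
proof -
  let ?e = "eps \<delta>"
  have e: "?e \<in> Orn" using eps_orn[OF d] .
  have ev: "?e v = Delta par (oo \<delta> v) v" using v unfolding eps_def by simp
  have yv: "y \<in> ?e v" using ev o_sup[OF d v] y O_le[OF d y] unfolding Delta_def by blast
  have "y \<notin> ?e x" if l: "leaf ?e v x" for x
  proof
    assume yx: "y \<in> ?e x"
    have xe: "x \<in> ?e v" and xv: "x \<noteq> v" and Dx: "Delta par (?e v) x = ?e x" and fr: "isfree ?e v x"
      using l unfolding leaf_def by auto
    have xV: "x \<in> V" using O_V e xe by blast
    have ex: "?e x = Delta par (oo \<delta> x) x" using xV unfolding eps_def by simp
    have yx': "tree_le par y x" using yx ex unfolding Delta_def by blast
    have xlv: "tree_le par x v" using O_le e xe by blast
    have xd: "x \<in> \<delta> v" using O_path[OF d y yx' xlv] .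
    obtain u1 where u1: "tree_le par x u1" "u1 \<noteq> r" "par u1 = v" using child_ex[OF xlv xv] by blast
    have u1v: "tree_le par u1 v" using le_par_self u1(3) by metis
    have u1d: "u1 \<in> \<delta> v" using O_path[OF d xd u1(1) u1v] .
    have u1V: "u1 \<in> V" using O_V d u1d by blast
    have ou1: "oo \<delta> u1 = \<delta> v" using o_child[OF d v u1d u1(2,3)] .
    have "x \<in> ?e u1" using u1V ou1 xd u1(1) unfolding eps_def Delta_def by simp
    moreover have "u1 \<in> ?e v" using ev o_sup[OF d v] u1d u1v unfolding Delta_def by blast
    moreover have "u1 \<noteq> v" using child_neq[OF u1V u1(2,3)] .
    ultimately have xu1: "u1 = x" using fr unfolding isfree_def by blast
    have "u1 \<in> children V r par v" using u1V u1 unfolding children_def by blast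
    then have nD: "Delta par (\<delta> v) u1 \<noteq> Delta par (oo \<delta> v) u1" using cond v u1d by blast
    have "Delta par (\<delta> v) u1 \<subseteq> Delta par (oo \<delta> v) u1" using o_sup[OF d v] unfolding Delta_def by blast
    then obtain z where z: "z \<in> oo \<delta> v" "tree_le par z u1" "z \<notin> \<delta> v" using nD unfolding Delta_def by blast
    have "z \<in> Delta par (?e v) x" using ev z xu1 le_trans[OF z(2) u1v] unfolding Delta_def by auto
    then have "z \<in> oo \<delta> x" using Dx ex unfolding Delta_def by blast
    then show False using o_inside[OF d v xd xv] z(3) by blast
  qed
  then show ?thesis using yv by blast
qed

lemma eps_b:
  assumes d: "\<delta> \<in> Orn" and v: "v \<in> V" and y: "y \<in> eps \<delta> v" "y \<notin> \<delta> v"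
  shows "\<exists>x. leaf (eps \<delta>) v x \<and> y \<in> eps \<delta> x"
proof -
  let ?e = "eps \<delta>"
  have e: "?e \<in> Orn" using eps_orn[OF d] .
  have ev: "?e v = Delta par (oo \<delta> v) v" using v unfolding eps_def by simp
  have yo: "y \<in> oo \<delta> v" and yv: "tree_le par y v" using y ev unfolding Delta_def by auto
  obtain c where c: "tree_le par y c" "tree_le par c v" "c \<notin> \<delta> v" "c \<noteq> r" "par c \<in> \<delta> v"
    using exit_ex[OF yv y(2) O_self[OF d v]] by blast
  have co: "c \<in> oo \<delta> v" using o_path[OF d v yo c(1,2)] .
  have cV: "c \<in> V" using o_sup[OF d v] co by blast
  have occ: "oo \<delta> c = oo \<delta> v" using o_hang[OF d v co c(3,5)] .
  have ec: "?e c = Delta par (oo \<delta> v) c" using cV occ unfolding eps_def by simp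
  have ce: "c \<in> ?e v" using ev co c(2) unfolding Delta_def by blast
  have cv: "c \<noteq> v" using c(3) O_self[OF d v] by blast
  have D: "Delta par (?e v) c = ?e c" using ev ec c(2) le_trans unfolding Delta_def by blast
  have fr: "isfree ?e v c" unfolding isfree_def
  proof (intro ballI impI)
    fix w assume w: "w \<in> ?e v" "w \<noteq> v" "c \<in> ?e w"
    have wV: "w \<in> V" using O_V e w(1) by blast
    have wo: "c \<in> oo \<delta> w" "tree_le par c w" using w(3) wV unfolding eps_def Delta_def by auto
    show "w = c"
    proof (rule ccontr)
      assume "w \<noteq> c"
      then have pcw: "tree_le par (par c) w" using le_par wo(2) by metis
      have wv: "tree_le par w v" using O_le e w(1) by blast
      have "w \<in> \<delta> v" using O_path[OF d c(5) pcw wv] .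
      then have "oo \<delta> w \<subseteq> \<delta> v" using o_inside[OF d v _ w(2)] by blast
      then show False using wo(1) c(3) by blast
    qed
  qed
  have "leaf ?e v c" unfolding leaf_def using v ce cv D fr by blast
  moreover have "y \<in> ?e c" using ec yo c(1) unfolding Delta_def by blast
  ultimately show ?thesis by blast
qed

end

theorem theorem1p2:
  assumes "rooted_tree V r par"
    and "\<delta> \<in> ornamentations V r par"
  shows "\<delta> \<in> Pop V r par ` ornamentations V r par \<longleftrightarrow>
    (\<forall>u\<in>V. \<forall>u'\<in>children V r par u. u' \<in> \<delta> u \<longrightarrow>
        Delta par (\<delta> u) u' \<noteq> Delta par (o_orn V \<delta> u) u')"
proof -
  interpret rtree V r par using assms(1) by unfold_locales
  have d: "\<delta> \<in> ornamentations V r par" using assms(2) .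
  show ?thesis
  proof
    assume "\<delta> \<in> Pop V r par ` ornamentations V r par"
    then obtain \<epsilon> where e: "\<epsilon> \<in> ornamentations V r par" and dd: "\<delta> = Pop V r par \<epsilon>" by blast
    show "\<forall>u\<in>V. \<forall>u'\<in>children V r par u. u' \<in> \<delta> u \<longrightarrow> Delta par (\<delta> u) u' \<noteq> Delta par (o_orn V \<delta> u) u'"
    proof (intro ballI impI)
      fix u u' assume u: "u \<in> V" and ch: "u' \<in> children V r par u" and ud: "u' \<in> \<delta> u"
      have u': "u' \<in> V" "u' \<noteq> r" "par u' = u" using ch unfolding children_def by auto
      obtain x where x: "tree_le par x u'" "x \<notin> \<delta> u" "x \<in> o_orn V \<delta> u"
        using pop_cond[OF e dd d u u' ud] by blast
      show "Delta par (\<delta> u) u' \<noteq> Delta par (o_orn V \<delta> u) u'"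
      proof
        assume eq: "Delta par (\<delta> u) u' = Delta par (o_orn V \<delta> u) u'"
        have "x \<in> Delta par (o_orn V \<delta> u) u'" using x unfolding Delta_def by blast
        then show False using eq x(2) unfolding Delta_def by blast
      qed
    qed
  next
    assume cond: "\<forall>u\<in>V. \<forall>u'\<in>children V r par u. u' \<in> \<delta> u \<longrightarrow> Delta par (\<delta> u) u' \<noteq> Delta par (o_orn V \<delta> u) u'"
    have eo: "eps \<delta> \<in> ornamentations V r par" using eps_orn[OF d] .
    have "Pop V r par (eps \<delta>) = \<delta>"
    proof
      fix v show "Pop V r par (eps \<delta>) v = \<delta> v"
      proof (cases "v \<in> V")
        case False
        have "eps \<delta> v = {}" using False unfolding eps_def by simp
        then show ?thesis using Pop_mem[OF eo] O_empty[OF d False] by blast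
      next
        case True
        show ?thesis
        proof (rule set_eqI)
          fix y show "y \<in> Pop V r par (eps \<delta>) v \<longleftrightarrow> y \<in> \<delta> v"
            using Pop_mem[OF eo, of y v] eps_a[OF d cond True, of y] eps_b[OF d True, of y] by blast
        qed
      qed
    qed
    then show "\<delta> \<in> Pop V r par ` ornamentations V r par" using eo by (metis image_eqI)
  qed
qed

end
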